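(* Let $\mathcal F$ be a semiholomorphic foliation on an open set $U\subset\mathbb C^2$ with holomorphic coordinates $(x,y)$, transverse to the fibration $\{x=\text{const}\}$ and defined by $dy-\lambda\,dx$ with $\lambda\in C^\infty(U,\mathbb C)$. Put $b=\partial\lambda/\partial\bar y$. Let $L$ be a (connected) leaf of $\mathcal F$ in $U$, written as a graph $y=\varphi(x)$, $x\in D$, and consider $b_L(x)=b(x,\varphi(x))$ as a function of $x\in D$. Then the zero set of $b_L$ is either discrete in $D$ or all of $D$. Moreover, if $x_0$ is an isolated zero of $b_L$, then $\frac{\partial b_L}{\partial\bar x}(x_0)=0$.
   Context: A semiholomorphic foliation is a real $C^\infty$ foliation of real codimension $2$ whose leaves are holomorphic curves. In coordinates as in the statement, the slope $\lambda$ satisfies $\frac{\partial\lambda}{\partial\bar x}+\bar\lambda\frac{\partial\lambda}{\partial\bar y}=0$, and the leaves are the graphs of holomorphic functions $y=\varphi(x)$ with $\varphi'(x)=\lambda(x,\varphi(x))$. *)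

theory Defs
  imports "HOL-Analysis.Analysis"
begin

fun ddir :: "'a::real_normed_vector list \<Rightarrow> ('a \<Rightarrow> 'b::real_normed_vector) \<Rightarrow> 'a \<Rightarrow> 'b" where
  "ddir [] f = f"
| "ddir (v # vs) f = (\<lambda>p. frechet_derivative (ddir vs f) (at p) v)"

text \<open>Real C-infinity on an open set: all iterated real derivatives exist (everywhere
  differentiable to all orders, which on an open set is the same as C-infinity).\<close>
definition smooth_on :: "'a::real_normed_vector set \<Rightarrow> ('a \<Rightarrow> 'b::real_normed_vector) \<Rightarrow> bool" where
  "smooth_on U f \<longleftrightarrow> (\<forall>vs. \<forall>p\<in>U. ddir vs f differentiable (at p))"

definition dbar_x :: "(complex \<times> complex \<Rightarrow> complex) \<Rightarrow> complex \<times> complex \<Rightarrow> complex" where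
  "dbar_x f p = (frechet_derivative f (at p) (1, 0) + \<i> * frechet_derivative f (at p) (\<i>, 0)) / 2"

definition dbar_y :: "(complex \<times> complex \<Rightarrow> complex) \<Rightarrow> complex \<times> complex \<Rightarrow> complex" where
  "dbar_y f p = (frechet_derivative f (at p) (0, 1) + \<i> * frechet_derivative f (at p) (0, \<i>)) / 2"

definition dbar :: "(complex \<Rightarrow> complex) \<Rightarrow> complex \<Rightarrow> complex" where
  "dbar f z = (frechet_derivative f (at z) 1 + \<i> * frechet_derivative f (at z) \<i>) / 2"

end

theory Submission
  imports Defs "HOL-Complex_Analysis.Complex_Analysis"
begin

lemma real_linear_complex:
  assumes "linear T"
  shows "T w = of_real (Re w) * T 1 + of_real (Im w) * T \<i>"
proof -
  have "w = Re w *\<^sub>R 1 + Im w *\<^sub>R \<i>" by (simp add: complex_eq_iff)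
  then have "T w = T (Re w *\<^sub>R 1 + Im w *\<^sub>R \<i>)" by simp
  also have "\<dots> = Re w *\<^sub>R T 1 + Im w *\<^sub>R T \<i>"
    using assms by (simp add: linear_add linear_scale)
  finally show ?thesis by (simp add: scaleR_conv_of_real)
qed

lemma wirt_rot:
  assumes "linear T"
  shows "(T 1 + \<i> * T \<i>) / 2 * cis (- th) = (T (cis th) + \<i> * T (\<i> * cis th)) / 2"
proof -
  have a: "T (cis th) = of_real (cos th) * T 1 + of_real (sin th) * T \<i>"
    using real_linear_complex[OF assms, of "cis th"] by simp
  have b: "T (\<i> * cis th) = of_real (- sin th) * T 1 + of_real (cos th) * T \<i>"
    using real_linear_complex[OF assms, of "\<i> * cis th"] by simp
  show ?thesis unfolding a b
    by (simp add: cis.code complex_eq_iff algebra_simps)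
qed

lemma cont_fx_test:
  fixes DC :: "complex \<Rightarrow> complex \<Rightarrow>\<^sub>L complex"
  assumes cont: "continuous_on UNIV DC"
  shows "continuous_on (UNIV \<times> S)
     (\<lambda>p. blinfun_mult_right (cis (- snd (snd p))) o\<^sub>L DC (fst p + of_real (fst (snd p)) * cis (snd (snd p))))"
  by (intro continuous_intros continuous_on_compose2[OF cont]) auto

lemma deriv_integrand:
  fixes DC :: "complex \<Rightarrow> complex \<Rightarrow>\<^sub>L complex"
  assumes deriv: "\<And>p. (C has_derivative blinfun_apply (DC p)) (at p)"
  shows "((\<lambda>z. C (z + a) * e) has_derivative
      blinfun_apply (blinfun_mult_right e o\<^sub>L DC (z + a))) (at z)"
proof -
  have "((\<lambda>z. C (z + a)) has_derivative (\<lambda>v. DC (z+a) v)) (at z)"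
    using has_derivative_compose[OF has_derivative_add_const[OF has_derivative_ident] deriv, of a z]
    by (simp add: o_def)
  from has_derivative_mult_left[OF this, of e] show ?thesis
    by (rule has_derivative_eq_rhs) (simp add: fun_eq_iff)
qed

lemma circle_mean_deriv:
  fixes DC :: "complex \<Rightarrow> complex \<Rightarrow>\<^sub>L complex"
  assumes deriv: "\<And>p. (C has_derivative blinfun_apply (DC p)) (at p)"
    and cont: "continuous_on UNIV DC"
  shows "((\<lambda>r. integral {0..2*pi} (\<lambda>th. C (z + of_real r * cis th))) has_vector_derivative
           integral {0..2*pi} (\<lambda>th. DC (z + of_real r * cis th) (cis th))) (at r)"
proof -
  have contC: "continuous_on UNIV C"
    by (rule continuous_at_imp_continuous_on) (use deriv has_derivative_continuous in blast)
  have "((\<lambda>r. integral (cbox 0 (2*pi)) (\<lambda>th. C (z + of_real r * cis th))) has_vector_derivative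
           integral (cbox 0 (2*pi)) (\<lambda>th. DC (z + of_real r * cis th) (cis th))) (at r within UNIV)"
  proof (rule leibniz_rule_vector_derivative)
    fix x :: real and t :: real
    have "((\<lambda>x. z + of_real x * cis t) has_derivative (\<lambda>h. h *\<^sub>R cis t)) (at x)"
    proof -
      have "((\<lambda>x. x *\<^sub>R cis t) has_derivative (\<lambda>h. h *\<^sub>R cis t)) (at x)"
        by (rule bounded_linear_imp_has_derivative[OF bounded_linear_scaleR_left])
      from has_derivative_add[OF has_derivative_const[of z] this]
      show ?thesis by (simp add: scaleR_conv_of_real)
    qed
    from has_derivative_compose[OF this deriv]
    show "((\<lambda>x. C (z + of_real x * cis t)) has_vector_derivative DC (z + of_real x * cis t) (cis t)) (at x within UNIV)"
      by (simp add: has_vector_derivative_def blinfun.scaleR_right o_def)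
  next
    fix x :: real
    show "(\<lambda>th. C (z + of_real x * cis th)) integrable_on cbox 0 (2*pi)"
      by (intro integrable_continuous continuous_on_compose2[OF contC] continuous_intros) auto
  next
    show "continuous_on (UNIV \<times> cbox 0 (2 * pi)) (\<lambda>(x, t). DC (z + of_real x * cis t) (cis t))"
      unfolding split_beta
      by (intro continuous_intros continuous_on_compose2[OF cont]) auto
  qed auto
  then show ?thesis by (simp add: cbox_interval)
qed

lemma circle_tangential_zero:
  fixes DC :: "complex \<Rightarrow> complex \<Rightarrow>\<^sub>L complex"
  assumes deriv: "\<And>p. (C has_derivative blinfun_apply (DC p)) (at p)"
    and r: "r \<noteq> 0"
  shows "((\<lambda>th. DC (z + of_real r * cis th) (\<i> * cis th)) has_integral 0) {0..2*pi}"
proof -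
  have "((\<lambda>th. C (z + of_real r * cis th)) has_vector_derivative DC (z + of_real r * cis th) (r *\<^sub>R (\<i> * cis th))) (at th within {0..2*pi})" for th
  proof -
    have "((\<lambda>th. z + of_real r * cis th) has_derivative (\<lambda>h. h *\<^sub>R (r *\<^sub>R (\<i> * cis th)))) (at th within {0..2*pi})"
    proof -
      have "((\<lambda>th. cis th) has_derivative (\<lambda>h. h *\<^sub>R (\<i> * cis th))) (at th within {0..2*pi})"
        using has_derivative_cis[OF has_derivative_ident] by simp
      from has_derivative_add[OF has_derivative_const[of z] has_derivative_mult_right[OF this, of "of_real r"]]
      show ?thesis by (simp add: scaleR_conv_of_real algebra_simps)
    qed
    from has_derivative_compose[OF this deriv]
    show ?thesis
      by (simp add: has_vector_derivative_def blinfun.scaleR_right o_def)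
  qed
  from fundamental_theorem_of_calculus[OF _ this]
  have "((\<lambda>th. DC (z + of_real r * cis th) (r *\<^sub>R (\<i> * cis th))) has_integral 0) {0..2*pi}"
    by (simp add: cis_2pi)
  from has_integral_cmul[OF this, of "1/r"]
  show ?thesis using r by (simp add: blinfun.scaleR_right)
qed

lemma cauchy_transform:
  fixes C :: "complex \<Rightarrow> complex" and DC :: "complex \<Rightarrow> complex \<Rightarrow>\<^sub>L complex"
  assumes deriv: "\<And>p. (C has_derivative blinfun_apply (DC p)) (at p)"
    and cont: "continuous_on UNIV DC"
    and rho: "0 \<le> \<rho>"
    and supp: "\<And>p. dist z0 p > \<rho> \<Longrightarrow> C p = 0"
  shows "\<exists>g Dg. \<forall>z\<in>ball z0 1. (g has_derivative Dg z) (at z) \<and> (Dg z 1 + \<i> * Dg z \<i>) / 2 = C z"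
proof -
  define R where "R = \<rho> + 1"
  have R: "0 \<le> R" using rho by (simp add: R_def)
  define B where "B = cbox (0::real,0::real) (R, 2*pi)"
  define q where "q z t = z + of_real (fst t) * cis (snd t)" for z :: complex and t :: "real \<times> real"
  define fx where "fx z t = blinfun_mult_right (cis (- snd t)) o\<^sub>L DC (q z t)" for z t
  define Ig where "Ig z = integral B (\<lambda>t. C (q z t) * cis (- snd t))" for z
  have contC: "continuous_on UNIV C"
    by (rule continuous_at_imp_continuous_on) (use deriv has_derivative_continuous in blast)
  have contfx: "continuous_on (UNIV \<times> B) (\<lambda>(x, t). fx x t)"
    unfolding split_beta fx_def q_def
    by (intro continuous_intros continuous_on_compose2[OF cont]) auto
  have fxint: "fx z integrable_on B" for z
    unfolding B_def fx_def q_def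
    by (intro integrable_continuous continuous_intros continuous_on_compose2[OF cont]) auto
  have dI: "(Ig has_derivative blinfun_apply (integral B (fx z))) (at z)" for z
  proof -
    have "(Ig has_derivative blinfun_apply (integral B (fx z))) (at z within UNIV)"
      unfolding Ig_def B_def
    proof (rule leibniz_rule)
      fix x t
      show "((\<lambda>x. C (q x t) * cis (- snd t)) has_derivative blinfun_apply (fx x t)) (at x within UNIV)"
        unfolding q_def fx_def using deriv_integrand[OF deriv] by simp
    next
      fix x
      show "(\<lambda>t. C (q x t) * cis (- snd t)) integrable_on cbox (0, 0) (R, 2 * pi)"
        unfolding q_def
        by (intro integrable_continuous continuous_intros continuous_on_compose2[OF contC]) auto
    qed (use contfx[unfolded B_def] in auto)
    then show ?thesis by simp
  qed
  have key: "integral B (\<lambda>t. (DC (q z t) 1 + \<i> * DC (q z t) \<i>) / 2 * cis (- snd t)) = - of_real pi * C z"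
    if z: "z \<in> ball z0 1" for z
  proof -
    define H where "H t = (DC (q z t) 1 + \<i> * DC (q z t) \<i>) / 2 * cis (- snd t)" for t
    define F where "F r = integral {0..2*pi} (\<lambda>th. C (z + of_real r * cis th))" for r
    define F' where "F' r = integral {0..2*pi} (\<lambda>th. DC (z + of_real r * cis th) (cis th))" for r
    have lin: "linear (blinfun_apply (DC p))" for p
      by (rule bounded_linear.linear[OF blinfun.bounded_linear_right])
    have contH: "continuous_on B H"
      unfolding H_def B_def q_def
      by (intro continuous_intros continuous_on_compose2[OF cont]) auto
    have fub: "integral B H = integral {0..R} (\<lambda>r. integral {0..2*pi} (\<lambda>th. H (r, th)))"
      using integral_prod_continuous[OF contH[unfolded B_def]] unfolding B_def by (simp add: cbox_interval)
    have Fd: "(F has_vector_derivative F' r) (at r)" for r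
      unfolding F_def F'_def by (rule circle_mean_deriv[OF deriv cont])
    have inner: "((\<lambda>th. H (r, th)) has_integral F' r / 2) {0..2*pi}" if r: "r \<noteq> 0" for r
    proof -
      have a: "((\<lambda>th. DC (z + of_real r * cis th) (cis th)) has_integral F' r) {0..2*pi}"
        unfolding F'_def
        by (intro integrable_integral integrable_continuous_interval continuous_intros continuous_on_compose2[OF cont]) auto
      have b: "((\<lambda>th. DC (z + of_real r * cis th) (\<i> * cis th)) has_integral 0) {0..2*pi}"
        by (rule circle_tangential_zero[OF deriv r])
      have "((\<lambda>th. (DC (z + of_real r * cis th) (cis th) + \<i> * DC (z + of_real r * cis th) (\<i> * cis th)) / 2) has_integral (F' r + \<i> * 0) / 2) {0..2*pi}"
        by (intro has_integral_divide has_integral_add a has_integral_mult_right b)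
      moreover have "(\<lambda>th. H (r, th)) = (\<lambda>th. (DC (z + of_real r * cis th) (cis th) + \<i> * DC (z + of_real r * cis th) (\<i> * cis th)) / 2)"
        unfolding H_def q_def using wirt_rot[OF lin] by simp
      ultimately show ?thesis by simp
    qed
    have ftc: "(F' has_integral F R - F 0) {0..R}"
      by (rule fundamental_theorem_of_calculus[OF R has_vector_derivative_at_within[OF Fd]])
    have hp: "((\<lambda>r. F' r / 2) has_integral (F R - F 0) / 2) {0..R}"
      by (rule has_integral_divide[OF ftc])
    have "((\<lambda>r. integral {0..2*pi} (\<lambda>th. H (r, th))) has_integral (F R - F 0) / 2) {0..R}"
    proof (rule has_integral_spike_finite[where S="{0}", OF _ _ hp])
      show "integral {0..2*pi} (\<lambda>th. H (r, th)) = F' r / 2" if "r \<in> {0..R} - {0}" for r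
        using integral_unique[OF inner] that by auto
    qed auto
    moreover have "F R = 0"
    proof -
      have "C (z + of_real R * cis th) = 0" for th
      proof (rule supp)
        have "dist z0 z < 1" using z by simp
        moreover have "norm (of_real R * cis th) = R" using R by (simp add: norm_mult)
        moreover have "norm (of_real R * cis th) \<le> dist z0 (z + of_real R * cis th) + dist z0 z"
          using norm_triangle_ineq[of "(z + of_real R * cis th) - z0" "z0 - z"]
          by (simp add: dist_norm norm_minus_commute)
        ultimately show "dist z0 (z + of_real R * cis th) > \<rho>" unfolding R_def by linarith
      qed
      then show ?thesis unfolding F_def by simp
    qed
    moreover have "F 0 = of_real (2*pi) * C z"
      unfolding F_def by (simp add: scaleR_conv_of_real)
    ultimately have "integral {0..R} (\<lambda>r. integral {0..2*pi} (\<lambda>th. H (r, th))) = - of_real pi * C z"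
      by (auto dest!: integral_unique)
    then show ?thesis using fub unfolding H_def by simp
  qed
  define g where "g z = - of_real (1/pi) * Ig z" for z
  define Dg where "Dg z v = - of_real (1/pi) * blinfun_apply (integral B (fx z)) v" for z v
  have "(g has_derivative Dg z) (at z)" for z
    unfolding g_def Dg_def using has_derivative_mult_right[OF dI[of z], of "- of_real (1/pi)"] by simp
  moreover have "(Dg z 1 + \<i> * Dg z \<i>) / 2 = C z" if "z \<in> ball z0 1" for z
  proof -
    have ap: "blinfun_apply (integral B (fx z)) v = integral B (\<lambda>t. DC (q z t) v * cis (- snd t))" for v
      by (simp add: blinfun_apply_integral[OF fxint] fx_def mult.commute)
    have i1: "((\<lambda>t. DC (q z t) v * cis (- snd t)) has_integral blinfun_apply (integral B (fx z)) v) B" for v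
      unfolding ap unfolding B_def q_def
      by (intro integrable_integral integrable_continuous continuous_intros continuous_on_compose2[OF cont]) auto
    have "((\<lambda>t. (DC (q z t) 1 * cis (- snd t) + \<i> * (DC (q z t) \<i> * cis (- snd t))) / 2) has_integral
         (blinfun_apply (integral B (fx z)) 1 + \<i> * blinfun_apply (integral B (fx z)) \<i>) / 2) B"
      using has_integral_divide[OF has_integral_add[OF i1[of 1] has_integral_mult_right[OF i1[of \<i>], of \<i>]], of 2]
      by simp
    then have "((\<lambda>t. (DC (q z t) 1 + \<i> * DC (q z t) \<i>) / 2 * cis (- snd t)) has_integral
         (blinfun_apply (integral B (fx z)) 1 + \<i> * blinfun_apply (integral B (fx z)) \<i>) / 2) B"
      by (simp add: algebra_simps add_divide_distrib)
    from integral_unique[OF this] key[OF that]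
    have e: "(blinfun_apply (integral B (fx z)) 1 + \<i> * blinfun_apply (integral B (fx z)) \<i>) / 2 = - of_real pi * C z"
      by simp
    have "(Dg z 1 + \<i> * Dg z \<i>) / 2 = - of_real (1/pi) * ((blinfun_apply (integral B (fx z)) 1 + \<i> * blinfun_apply (integral B (fx z)) \<i>) / 2)"
      unfolding Dg_def by (simp add: algebra_simps)
    also have "\<dots> = C z" unfolding e by (simp add: of_real_def)
    finally show ?thesis .
  qed
  ultimately show ?thesis by blast
qed

lemma dbar0_field_deriv:
  assumes d: "(h has_derivative T) (at z)" and z: "T 1 + \<i> * T \<i> = 0"
  shows "(h has_field_derivative T 1) (at z)"
proof -
  have lin: "linear T" using d has_derivative_linear by blast
  have Ti: "T \<i> = \<i> * T 1" using z by (metis add_eq_0_iff i_squared mult.assoc mult_minus_left mult_1 minus_minus)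
  have "T = (\<lambda>w. T 1 * w)"
  proof
    fix w
    have "T w = of_real (Re w) * T 1 + of_real (Im w) * T \<i>" by (rule real_linear_complex[OF lin])
    also have "\<dots> = T 1 * (of_real (Re w) + \<i> * of_real (Im w))" unfolding Ti by (simp add: algebra_simps)
    also have "\<dots> = T 1 * w" by (metis complex_eq)
    finally show "T w = T 1 * w" .
  qed
  with d show ?thesis by (simp add: has_field_derivative_def)
qed

lemma Blinfun_complex_eq:
  fixes T :: "complex \<Rightarrow> complex"
  assumes "linear T"
  shows "Blinfun T = (blinfun_scaleR_left (T 1) o\<^sub>L Blinfun Re) + (blinfun_scaleR_left (T \<i>) o\<^sub>L Blinfun Im)"
proof (rule blinfun_eqI)
  fix w
  have bl: "bounded_linear T" using assms linear_conv_bounded_linear by blast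
  show "blinfun_apply (Blinfun T) w = blinfun_apply ((blinfun_scaleR_left (T 1) o\<^sub>L Blinfun Re) + (blinfun_scaleR_left (T \<i>) o\<^sub>L Blinfun Im)) w"
    using real_linear_complex[OF assms, of w]
    by (simp add: bounded_linear_Blinfun_apply[OF bl] bounded_linear_Blinfun_apply[OF bounded_linear_Re]
        bounded_linear_Blinfun_apply[OF bounded_linear_Im] scaleR_conv_of_real plus_blinfun.rep_eq)
qed

lemma continuous_on_Blinfun_complex:
  fixes D :: "'a::topological_space \<Rightarrow> complex \<Rightarrow> complex"
  assumes lin: "\<And>p. p \<in> S \<Longrightarrow> linear (D p)"
    and c1: "continuous_on S (\<lambda>p. D p 1)" and c2: "continuous_on S (\<lambda>p. D p \<i>)"
  shows "continuous_on S (\<lambda>p. Blinfun (D p))"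
proof -
  have "continuous_on S (\<lambda>p. (blinfun_scaleR_left (D p 1) o\<^sub>L Blinfun Re) + (blinfun_scaleR_left (D p \<i>) o\<^sub>L Blinfun Im))"
    by (intro continuous_intros c1 c2)
  then show ?thesis
    by (rule continuous_on_cong[THEN iffD1, rotated 2]) (auto simp: Blinfun_complex_eq[OF lin])
qed

definition mq :: "real \<Rightarrow> real" where "mq s = (max 0 s)^2"

lemma mq_deriv: "(mq has_real_derivative 2 * max 0 s) (at s)"
proof (cases "s = 0")
  case True
  have "((\<lambda>y. (mq y - mq 0) / (y - 0)) \<longlongrightarrow> 2 * max 0 0) (at 0)"
  proof -
    have "((\<lambda>y. max 0 y) \<longlongrightarrow> max 0 0) (at (0::real))"
      by (intro tendsto_intros)
    then have "((\<lambda>y. max 0 y) \<longlongrightarrow> 0) (at (0::real))" by simp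
    moreover have "\<forall>\<^sub>F y in at 0. max 0 y = (mq y - mq 0) / (y - 0)"
      unfolding eventually_at_filter
      by (auto simp: mq_def max_def power2_eq_square)
    ultimately show ?thesis by (simp add: tendsto_cong)
  qed
  then show ?thesis using True by (simp add: has_field_derivative_iff)
next
  case False
  show ?thesis
  proof (cases "s > 0")
    case True
    have "((\<lambda>y. y^2) has_real_derivative 2 * max 0 s) (at s)"
      using True by (auto intro!: derivative_eq_intros)
    then show ?thesis
      by (rule has_field_derivative_transform_within_open[where S="{0<..}"]) (use True in \<open>auto simp: mq_def\<close>)
  next
    case False
    with \<open>s \<noteq> 0\<close> have "s < 0" by simp
    have "((\<lambda>y. 0) has_real_derivative 2 * max 0 s) (at s)"
      using \<open>s < 0\<close> by simp
    then show ?thesis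
      by (rule has_field_derivative_transform_within_open[where S="{..<0}"]) (use \<open>s < 0\<close> in \<open>auto simp: mq_def\<close>)
  qed
qed

definition psi :: "real \<Rightarrow> real" where
  "psi t = 1 - 2 * mq (t - 1) + 4 * mq (t - 3/2) - 2 * mq (t - 2)"
definition psi' :: "real \<Rightarrow> real" where
  "psi' t = - 4 * max 0 (t - 1) + 8 * max 0 (t - 3/2) - 4 * max 0 (t - 2)"

lemma psi_deriv: "(psi has_real_derivative psi' t) (at t)"
  unfolding psi_def psi'_def
  by (rule derivative_eq_intros DERIV_chain2[OF mq_deriv] | simp)+

lemma psi_le1: "t \<le> 1 \<Longrightarrow> psi t = 1"
  by (simp add: psi_def mq_def)
lemma psi_ge2: "t \<ge> 2 \<Longrightarrow> psi t = 0"
  by (simp add: psi_def mq_def power2_eq_square algebra_simps)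
lemma psi'_ge2: "t \<ge> 2 \<Longrightarrow> psi' t = 0"
  by (simp add: psi'_def)
lemma continuous_psi: "continuous_on S psi"
  unfolding psi_def mq_def by (intro continuous_intros)
lemma continuous_psi': "continuous_on S psi'"
  unfolding psi'_def by (intro continuous_intros)

lemma cutoff_extend:
  fixes c :: "complex \<Rightarrow> complex" and Dc :: "complex \<Rightarrow> complex \<Rightarrow> complex"
  assumes eps: "0 < \<epsilon>"
    and dc: "\<And>p. p \<in> ball x0 \<epsilon> \<Longrightarrow> (c has_derivative Dc p) (at p)"
    and cD: "\<And>v. continuous_on (ball x0 \<epsilon>) (\<lambda>p. Dc p v)"
  shows "\<exists>C DC. (\<forall>p. (C has_derivative blinfun_apply (DC p)) (at p)) \<and> continuous_on UNIV DC
     \<and> (\<forall>p. dist x0 p > \<epsilon>*3/4 \<longrightarrow> C p = 0) \<and> (\<forall>p\<in>ball x0 (\<epsilon>/2). C p = c p)"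
proof -
  define n where "n p = ((p - x0) \<bullet> (p - x0)) * (1 / (\<epsilon>/2)^2)" for p
  define n' where "n' p v = 2 * ((p - x0) \<bullet> v) * (1 / (\<epsilon>/2)^2)" for p v
  have nd: "(n has_derivative n' p) (at p)" for p
    unfolding n_def n'_def by (rule derivative_eq_intros refl | simp add: inner_commute)+
  have npow: "n p = (dist x0 p / (\<epsilon>/2))^2" for p
    unfolding n_def by (simp add: power2_norm_eq_inner[symmetric] dist_norm norm_minus_commute power_divide)
  have far: "n p \<ge> 2" if "dist x0 p > \<epsilon>*3/4" for p
  proof -
    have "dist x0 p / (\<epsilon>/2) \<ge> 3/2" using that eps by (simp add: field_simps)
    then have "(dist x0 p / (\<epsilon>/2))^2 \<ge> (3/2)^2" by (rule power_mono) simp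
    moreover have "(3/2::real)^2 = 9/4" by (simp add: power2_eq_square)
    ultimately show ?thesis unfolding npow by linarith
  qed
  have near: "n p \<le> 1" if "dist x0 p < \<epsilon>/2" for p
  proof -
    have "dist x0 p / (\<epsilon>/2) \<le> 1" using that eps by (simp add: field_simps)
    moreover have "0 \<le> dist x0 p / (\<epsilon>/2)" using eps by simp
    ultimately have "(dist x0 p / (\<epsilon>/2))^2 \<le> 1^2" by (intro power_mono) auto
    then show ?thesis unfolding npow by simp
  qed
  define chi where "chi p = psi (n p)" for p
  define chi' where "chi' p v = psi' (n p) * n' p v" for p v
  have chid: "(chi has_derivative chi' p) (at p)" for p
    using has_derivative_compose[OF nd psi_deriv[unfolded has_field_derivative_def]]
    unfolding chi_def chi'_def by (simp add: o_def)
  define C where "C p = (if dist x0 p < \<epsilon> then of_real (chi p) * c p else 0)" for p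
  define D' where "D' p v = (if dist x0 p < \<epsilon> then of_real (chi' p v) * c p + of_real (chi p) * Dc p v else 0)" for p v
  define F where "F = {p. dist x0 p > \<epsilon>*3/4}"
  have openF: "open F" unfolding F_def by (intro open_Collect_less continuous_intros)
  have Ffar: "C p = 0" "D' p v = 0" if "p \<in> F" for p v
    using far[of p] that psi_ge2 psi'_ge2 unfolding F_def C_def D'_def chi_def chi'_def by auto
  have cover: "ball x0 \<epsilon> \<union> F = UNIV" unfolding F_def using eps by auto
  have Cd: "(C has_derivative D' p) (at p)" for p
  proof (cases "dist x0 p < \<epsilon>")
    case True
    have "((\<lambda>q. of_real (chi q) * c q) has_derivative (\<lambda>h. of_real (chi p) * Dc p h + of_real (chi' p h) * c p)) (at p)"
      by (rule has_derivative_mult[OF has_derivative_of_real[OF chid] dc]) (use True in simp)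
    then have "((\<lambda>q. of_real (chi q) * c q) has_derivative D' p) (at p)"
      by (rule has_derivative_eq_rhs) (use True in \<open>auto simp: D'_def fun_eq_iff\<close>)
    then show ?thesis
      by (rule has_derivative_transform_within_open[where s="ball x0 \<epsilon>"]) (use True in \<open>auto simp: C_def\<close>)
  next
    case False
    then have pF: "p \<in> F" unfolding F_def using eps by auto
    have "((\<lambda>q. 0) has_derivative D' p) (at p)"
    proof -
      have "D' p = (\<lambda>v. 0)" using Ffar(2)[OF pF] by (simp add: fun_eq_iff)
      then show ?thesis by simp
    qed
    then show ?thesis
      by (rule has_derivative_transform_within_open[OF _ openF pF]) (use Ffar in auto)
  qed
  have contc: "continuous_on (ball x0 \<epsilon>) c"
    using dc has_derivative_continuous continuous_on_eq_continuous_at[OF open_ball] by blast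
  have contD: "continuous_on UNIV (\<lambda>p. D' p v)" for v
  proof -
    have "continuous_on (ball x0 \<epsilon> \<union> F) (\<lambda>p. D' p v)"
    proof (rule continuous_on_open_Un[OF open_ball openF])
      have "continuous_on (ball x0 \<epsilon>) (\<lambda>p. of_real (chi' p v) * c p + of_real (chi p) * Dc p v)"
        unfolding chi'_def chi_def n'_def n_def
        by (intro continuous_intros contc cD continuous_on_compose2[OF continuous_psi' [of UNIV]]
            continuous_on_compose2[OF continuous_psi [of UNIV]]) auto
      then show "continuous_on (ball x0 \<epsilon>) (\<lambda>p. D' p v)"
        by (rule continuous_on_cong[THEN iffD1, rotated 2]) (auto simp: D'_def)
      show "continuous_on F (\<lambda>p. D' p v)"
        by (rule continuous_on_cong[THEN iffD1, OF refl _ continuous_on_const[of F 0]]) (use Ffar in auto)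
    qed
    then show ?thesis using cover by simp
  qed
  have lin: "linear (D' p)" for p using Cd has_derivative_linear by blast
  have bl: "blinfun_apply (Blinfun (D' p)) = D' p" for p
    using lin[of p] by (simp add: bounded_linear_Blinfun_apply linear_conv_bounded_linear)
  have "continuous_on UNIV (\<lambda>p. Blinfun (D' p))"
    by (rule continuous_on_Blinfun_complex[OF lin contD contD])
  moreover have "\<forall>p. (C has_derivative blinfun_apply (Blinfun (D' p))) (at p)"
    using Cd bl by simp
  moreover have "\<forall>p. dist x0 p > \<epsilon>*3/4 \<longrightarrow> C p = 0" using Ffar unfolding F_def by auto
  moreover have "\<forall>p\<in>ball x0 (\<epsilon>/2). C p = c p"
    using near psi_le1 eps unfolding C_def chi_def by auto
  ultimately show ?thesis
    by (intro exI[of _ C] exI[of _ "\<lambda>p. Blinfun (D' p)"]) blast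
qed

lemma local_holo:
  fixes f c :: "complex \<Rightarrow> complex" and Df Dc :: "complex \<Rightarrow> complex \<Rightarrow> complex"
  assumes D: "open D" and x0: "x0 \<in> D"
    and fd: "\<And>x. x \<in> D \<Longrightarrow> (f has_derivative Df x) (at x)"
    and eq: "\<And>x. x \<in> D \<Longrightarrow> (Df x 1 + \<i> * Df x \<i>) / 2 = c x * f x"
    and cd: "\<And>x. x \<in> D \<Longrightarrow> (c has_derivative Dc x) (at x)"
    and cD: "\<And>v. continuous_on D (\<lambda>x. Dc x v)"
  shows "\<exists>r>0. ball x0 r \<subseteq> D \<and> (\<exists>h. h holomorphic_on ball x0 r \<and> (\<forall>x\<in>ball x0 r. h x = 0 \<longleftrightarrow> f x = 0))"
proof -
  obtain \<epsilon> where eps: "\<epsilon> > 0" and epsD: "ball x0 \<epsilon> \<subseteq> D"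
    using D x0 open_contains_ball by blast
  obtain C DC where Cd: "\<forall>p. (C has_derivative blinfun_apply (DC p)) (at p)"
      and DCc: "continuous_on UNIV DC" and Cfar: "\<forall>p. dist x0 p > \<epsilon>*3/4 \<longrightarrow> C p = 0"
      and Cc: "\<forall>p\<in>ball x0 (\<epsilon>/2). C p = c p"
    using cutoff_extend[OF eps, of x0 c Dc] cd epsD continuous_on_subset[OF cD epsD] by blast
  obtain g Dg where g: "\<forall>z\<in>ball x0 1. (g has_derivative Dg z) (at z) \<and> (Dg z 1 + \<i> * Dg z \<i>) / 2 = C z"
    using cauchy_transform[of C DC "\<epsilon>*3/4" x0] Cd DCc Cfar eps by auto
  define r where "r = min (\<epsilon>/2) 1"
  have r: "r > 0" using eps by (simp add: r_def)
  have rD: "ball x0 r \<subseteq> D" using epsD eps unfolding r_def by auto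
  define h where "h x = f x * exp (- g x)" for x
  have hd: "(h field_differentiable at x)" if x: "x \<in> ball x0 r" for x
  proof -
    have xD: "x \<in> D" using x rD by auto
    have x1: "x \<in> ball x0 1" and xe: "x \<in> ball x0 (\<epsilon>/2)" using x unfolding r_def by auto
    have gd: "(g has_derivative Dg x) (at x)" and gdbar: "(Dg x 1 + \<i> * Dg x \<i>) / 2 = c x"
      using g x1 Cc xe by auto
    have ed: "((\<lambda>x. exp (- g x)) has_derivative (\<lambda>v. exp (- g x) * (- Dg x v))) (at x)"
      using has_derivative_compose[OF has_derivative_minus[OF gd] DERIV_exp[unfolded has_field_derivative_def]]
      by (simp add: o_def)
    define T where "T v = f x * (exp (- g x) * (- Dg x v)) + Df x v * exp (- g x)" for v
    have hd: "(h has_derivative T) (at x)"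
      unfolding h_def T_def by (rule has_derivative_mult[OF fd[OF xD] ed])
    have e1: "Df x 1 + \<i> * Df x \<i> = 2 * (c x * f x)" using eq[OF xD] by simp
    have e2: "Dg x 1 + \<i> * Dg x \<i> = 2 * c x" using gdbar by simp
    have "T 1 + \<i> * T \<i> = exp (- g x) * ((Df x 1 + \<i> * Df x \<i>) - f x * (Dg x 1 + \<i> * Dg x \<i>))"
      unfolding T_def by (simp add: algebra_simps)
    also have "\<dots> = 0" unfolding e1 e2 by simp
    finally have "T 1 + \<i> * T \<i> = 0" .
    from dbar0_field_deriv[OF hd this] show ?thesis
      unfolding field_differentiable_def by blast
  qed
  have "h holomorphic_on ball x0 r"
    using hd by (simp add: holomorphic_on_def field_differentiable_at_within)
  moreover have "\<forall>x\<in>ball x0 r. h x = 0 \<longleftrightarrow> f x = 0" by (simp add: h_def)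
  ultimately show ?thesis using r rD by blast
qed

lemma zeros_dichotomy:
  fixes f c :: "complex \<Rightarrow> complex" and Df Dc :: "complex \<Rightarrow> complex \<Rightarrow> complex"
  assumes D: "open D" and conn: "connected D"
    and fd: "\<And>x. x \<in> D \<Longrightarrow> (f has_derivative Df x) (at x)"
    and eq: "\<And>x. x \<in> D \<Longrightarrow> (Df x 1 + \<i> * Df x \<i>) / 2 = c x * f x"
    and cd: "\<And>x. x \<in> D \<Longrightarrow> (c has_derivative Dc x) (at x)"
    and cD: "\<And>v. continuous_on D (\<lambda>x. Dc x v)"
  shows "{x\<in>D. f x = 0} sparse_in D \<or> {x\<in>D. f x = 0} = D"
proof -
  define Z where "Z = {x\<in>D. f x = 0}"
  have L: "\<exists>r>0. ball x r \<subseteq> D \<and> (\<forall>y\<in>ball x r. f y = 0)" if x: "x \<in> D" "x islimpt Z" for x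
  proof -
    obtain r h where r: "r > 0" "ball x r \<subseteq> D" and hh: "h holomorphic_on ball x r"
        and hz: "\<forall>y\<in>ball x r. h y = 0 \<longleftrightarrow> f y = 0"
      using local_holo[OF D x(1) fd eq cd cD] by blast
    have lim: "x islimpt (Z \<inter> ball x r)"
      by (rule islimpt_Int_eventually[OF x(2)], rule eventually_at_in_open'[OF open_ball]) (use r in simp)
    have "h w = 0" if w: "w \<in> ball x r" for w
      by (rule analytic_continuation[OF hh open_ball connected_ball _ _ lim _ w])
        (use r hz in \<open>auto simp: Z_def\<close>)
    then show ?thesis using r hz by blast
  qed
  define A where "A = {x\<in>D. x islimpt Z}"
  have "openin (top_of_set D) A"
  proof -
    have "open A"
    proof (rule openI)
      fix x assume "x \<in> A"
      then obtain r where r: "r > 0" "ball x r \<subseteq> D" "\<forall>y\<in>ball x r. f y = 0"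
        using L unfolding A_def by blast
      have "ball x r \<subseteq> A"
      proof
        fix y assume y: "y \<in> ball x r"
        have "y islimpt ball x r" using y r by (simp add: islimpt_ball)
        moreover have "ball x r \<subseteq> Z" using r unfolding Z_def by auto
        ultimately show "y \<in> A" using y r unfolding A_def by (auto intro: islimpt_subset)
      qed
      then show "\<exists>e>0. ball x e \<subseteq> A" using r by blast
    qed
    moreover have "D \<inter> A = A" unfolding A_def by auto
    ultimately show ?thesis using openin_open_Int[of A D] by simp
  qed
  moreover have "closedin (top_of_set D) A"
  proof -
    have "A = D \<inter> {x. x islimpt Z}" unfolding A_def by auto
    then show ?thesis using closed_limpts[of Z] by (simp add: closedin_closed_Int)
  qed
  ultimately have "A = {} \<or> A = D" using conn connected_clopen by blast
  then show ?thesis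
  proof
    assume "A = {}"
    then have "\<forall>y\<in>D. \<not> y islimpt Z" unfolding A_def by auto
    then show ?thesis using sparse_in_open[OF D] unfolding Z_def by blast
  next
    assume AD: "A = D"
    have "f x = 0" if xD: "x \<in> D" for x
    proof -
      have "x islimpt Z" using xD AD unfolding A_def by blast
      then obtain r where "r > 0" "\<forall>y\<in>ball x r. f y = 0" using L[OF xD] by blast
      then show ?thesis by simp
    qed
    then show ?thesis by auto
  qed
qed

lemma schwarz_lim:
  fixes f :: "'a::real_normed_vector \<Rightarrow> 'b::real_inner"
  assumes U: "open U" "p \<in> U"
    and fd: "\<And>q. q \<in> U \<Longrightarrow> (f has_derivative Df q) (at q)"
    and dv: "((\<lambda>q. Df q v) has_derivative Av) (at p)"
  shows "((\<lambda>t. (1/t^2) *\<^sub>R (f (p + t *\<^sub>R v + t *\<^sub>R w) - f (p + t *\<^sub>R v) - f (p + t *\<^sub>R w) + f p)) \<longlongrightarrow> Av w) (at 0)"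
proof (rule LIM_I)
  fix r :: real assume r: "r > 0"
  define K where "K = norm v + norm w + 1"
  have K: "K > 0" by (simp add: K_def add_nonneg_pos)
  define \<epsilon> where "\<epsilon> = r / (4 * K)"
  have eps: "\<epsilon> > 0" using r K by (simp add: \<epsilon>_def)
  have blA: "bounded_linear Av" using dv has_derivative_bounded_linear by blast
  obtain d where d: "d > 0" and dd: "\<And>y. norm (y - p) < d \<Longrightarrow> norm (Df y v - Df p v - Av (y - p)) \<le> \<epsilon> * norm (y - p)"
    using dv[unfolded has_derivative_at_alt] eps by blast
  obtain d2 where d2: "d2 > 0" and bU: "ball p d2 \<subseteq> U"
    using U open_contains_ball by blast
  define s where "s = min d d2 / K"
  have s: "s > 0" using d d2 K by (simp add: s_def)
  show "\<exists>s>0. \<forall>t. t \<noteq> 0 \<and> norm (t - 0) < s \<longrightarrow>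
      norm ((1/t^2) *\<^sub>R (f (p + t *\<^sub>R v + t *\<^sub>R w) - f (p + t *\<^sub>R v) - f (p + t *\<^sub>R w) + f p) - Av w) < r"
  proof (intro exI[of _ s] conjI allI impI s)
    fix t :: real assume t: "t \<noteq> 0 \<and> norm (t - 0) < s"
    then have t0: "t \<noteq> 0" and ts: "\<bar>t\<bar> < s" by auto
    have tK: "\<bar>t\<bar> * K < min d d2" using ts K by (simp add: s_def field_simps)
    define q1 where "q1 x = p + (x * t) *\<^sub>R v + t *\<^sub>R w" for x
    define q2 where "q2 x = p + (x * t) *\<^sub>R v" for x
    have nq1: "norm (q1 x - p) \<le> \<bar>t\<bar> * K" if "x \<in> {0..1}" for x
    proof -
      have "norm (q1 x - p) = norm ((x * t) *\<^sub>R v + t *\<^sub>R w)" by (simp add: q1_def)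
      also have "\<dots> \<le> \<bar>x * t\<bar> * norm v + \<bar>t\<bar> * norm w" by (rule order_trans[OF norm_triangle_ineq]) simp
      also have "\<dots> \<le> \<bar>t\<bar> * norm v + \<bar>t\<bar> * norm w"
      proof -
        have "\<bar>x * t\<bar> \<le> \<bar>t\<bar>" using that by (simp add: abs_mult mult_left_le_one_le)
        then show ?thesis by (simp add: mult_right_mono)
      qed
      also have "\<dots> \<le> \<bar>t\<bar> * K" by (simp add: K_def algebra_simps)
      finally show ?thesis .
    qed
    have nq2: "norm (q2 x - p) \<le> \<bar>t\<bar> * K" if "x \<in> {0..1}" for x
    proof -
      have "norm (q2 x - p) = \<bar>x * t\<bar> * norm v" by (simp add: q2_def)
      also have "\<dots> \<le> \<bar>t\<bar> * norm v"
      proof -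
        have "\<bar>x * t\<bar> \<le> \<bar>t\<bar>" using that by (simp add: abs_mult mult_left_le_one_le)
        then show ?thesis by (simp add: mult_right_mono)
      qed
      also have "\<dots> \<le> \<bar>t\<bar> * K" by (simp add: K_def algebra_simps)
      finally show ?thesis .
    qed
    have inU1: "q1 x \<in> U" "norm (q1 x - p) < d" if "x \<in> {0..1}" for x
      using nq1[OF that] tK bU by (auto simp: dist_norm norm_minus_commute)
    have inU2: "q2 x \<in> U" "norm (q2 x - p) < d" if "x \<in> {0..1}" for x
      using nq2[OF that] tK bU by (auto simp: dist_norm norm_minus_commute)
    define G where "G x = f (q1 x) - f (q2 x) - (x * t^2) *\<^sub>R Av w" for x
    define G' where "G' x h = (h*t) *\<^sub>R Df (q1 x) v - (h*t) *\<^sub>R Df (q2 x) v - (h * t^2) *\<^sub>R Av w" for x h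
    have lin: "linear (Df q)" if "q \<in> U" for q using fd[OF that] has_derivative_linear by blast
    have Gd: "(G has_derivative G' x) (at x)" if x: "x \<in> {0..1}" for x
    proof -
      have d1: "(q1 has_derivative (\<lambda>h. (h*t) *\<^sub>R v)) (at x)"
        unfolding q1_def by (rule derivative_eq_intros refl | simp)+
      have d2: "(q2 has_derivative (\<lambda>h. (h*t) *\<^sub>R v)) (at x)"
        unfolding q2_def by (rule derivative_eq_intros refl | simp)+
      have e1: "((\<lambda>x. f (q1 x)) has_derivative (\<lambda>h. (h*t) *\<^sub>R Df (q1 x) v)) (at x)"
        using has_derivative_compose[OF d1 fd[OF inU1(1)[OF x]]] linear_scale[OF lin[OF inU1(1)[OF x]]]
        by (simp add: o_def)
      have e2: "((\<lambda>x. f (q2 x)) has_derivative (\<lambda>h. (h*t) *\<^sub>R Df (q2 x) v)) (at x)"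
        using has_derivative_compose[OF d2 fd[OF inU2(1)[OF x]]] linear_scale[OF lin[OF inU2(1)[OF x]]]
        by (simp add: o_def)
      have e3: "((\<lambda>x. (x * t^2) *\<^sub>R Av w) has_derivative (\<lambda>h. (h * t^2) *\<^sub>R Av w)) (at x)"
        by (rule derivative_eq_intros refl | simp)+
      show ?thesis unfolding G_def G'_def by (rule has_derivative_diff[OF has_derivative_diff[OF e1 e2] e3])
    qed
    have contG: "continuous_on {0..1} G"
      by (rule continuous_at_imp_continuous_on) (use Gd has_derivative_continuous in blast)
    obtain x where x: "x \<in> {0<..<1}" and mv: "norm (G 1 - G 0) \<le> norm (G' x (1 - 0))"
      using mvt_general[OF zero_less_one contG, of G'] Gd by auto
    have x01: "x \<in> {0..1}" using x by auto
    have AvL: "Av (q1 x - p) - Av (q2 x - p) = t *\<^sub>R Av w"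
      using blA by (simp add: q1_def q2_def linear_simps bounded_linear.linear)
    have "norm (Df (q1 x) v - Df (q2 x) v - t *\<^sub>R Av w)
        = norm ((Df (q1 x) v - Df p v - Av (q1 x - p)) - (Df (q2 x) v - Df p v - Av (q2 x - p)))"
      using AvL by (simp add: algebra_simps)
    also have "\<dots> \<le> \<epsilon> * norm (q1 x - p) + \<epsilon> * norm (q2 x - p)"
      by (rule order_trans[OF norm_triangle_ineq4 add_mono[OF dd[OF inU1(2)[OF x01]] dd[OF inU2(2)[OF x01]]]])
    also have "\<dots> \<le> \<epsilon> * (\<bar>t\<bar> * K) + \<epsilon> * (\<bar>t\<bar> * K)"
      using eps nq1[OF x01] nq2[OF x01] by (intro add_mono mult_left_mono) auto
    finally have b1: "norm (Df (q1 x) v - Df (q2 x) v - t *\<^sub>R Av w) \<le> 2 * \<epsilon> * \<bar>t\<bar> * K" by (simp add: algebra_simps)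
    have G'1: "G' x 1 = t *\<^sub>R (Df (q1 x) v - Df (q2 x) v - t *\<^sub>R Av w)"
      by (simp add: G'_def algebra_simps power2_eq_square)
    have "G 1 - G 0 = (f (p + t *\<^sub>R v + t *\<^sub>R w) - f (p + t *\<^sub>R v) - f (p + t *\<^sub>R w) + f p) - t^2 *\<^sub>R Av w"
      by (simp add: G_def q1_def q2_def algebra_simps)
    then have "norm ((f (p + t *\<^sub>R v + t *\<^sub>R w) - f (p + t *\<^sub>R v) - f (p + t *\<^sub>R w) + f p) - t^2 *\<^sub>R Av w)
       \<le> \<bar>t\<bar> * (2 * \<epsilon> * \<bar>t\<bar> * K)"
      using mv G'1 b1 by (simp add: order_trans[OF _ mult_left_mono[OF b1 abs_ge_zero]])
    then have "norm ((1/t^2) *\<^sub>R ((f (p + t *\<^sub>R v + t *\<^sub>R w) - f (p + t *\<^sub>R v) - f (p + t *\<^sub>R w) + f p) - t^2 *\<^sub>R Av w))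
       \<le> (1/t^2) * (\<bar>t\<bar> * (2 * \<epsilon> * \<bar>t\<bar> * K))"
      using t0 by (simp add: divide_right_mono)
    also have "\<dots> = 2 * \<epsilon> * K" using t0 by (simp add: power2_eq_square abs_mult_self_eq field_simps)
    also have "\<dots> < r" using r K by (simp add: \<epsilon>_def)
    finally show "norm ((1/t^2) *\<^sub>R (f (p + t *\<^sub>R v + t *\<^sub>R w) - f (p + t *\<^sub>R v) - f (p + t *\<^sub>R w) + f p) - Av w) < r"
      using t0 by (simp add: scaleR_diff_right)
  qed
qed

lemma schwarz:
  fixes f :: "'a::real_normed_vector \<Rightarrow> 'b::real_inner"
  assumes U: "open U" "p \<in> U"
    and fd: "\<And>q. q \<in> U \<Longrightarrow> (f has_derivative Df q) (at q)"
    and dv: "((\<lambda>q. Df q v) has_derivative Av) (at p)"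
    and dw: "((\<lambda>q. Df q w) has_derivative Aw) (at p)"
  shows "Av w = Aw v"
proof -
  have l1: "((\<lambda>t. (1/t^2) *\<^sub>R (f (p + t *\<^sub>R v + t *\<^sub>R w) - f (p + t *\<^sub>R v) - f (p + t *\<^sub>R w) + f p)) \<longlongrightarrow> Av w) (at 0)"
    by (rule schwarz_lim[OF U fd dv])
  have l2: "((\<lambda>t. (1/t^2) *\<^sub>R (f (p + t *\<^sub>R w + t *\<^sub>R v) - f (p + t *\<^sub>R w) - f (p + t *\<^sub>R v) + f p)) \<longlongrightarrow> Aw v) (at 0)"
    by (rule schwarz_lim[OF U fd dw])
  have "(\<lambda>t. (1/t^2) *\<^sub>R (f (p + t *\<^sub>R w + t *\<^sub>R v) - f (p + t *\<^sub>R w) - f (p + t *\<^sub>R v) + f p))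
      = (\<lambda>t. (1/t^2) *\<^sub>R (f (p + t *\<^sub>R v + t *\<^sub>R w) - f (p + t *\<^sub>R v) - f (p + t *\<^sub>R w) + f p))"
    by (simp add: algebra_simps)
  with l2 have l3: "((\<lambda>t. (1/t^2) *\<^sub>R (f (p + t *\<^sub>R v + t *\<^sub>R w) - f (p + t *\<^sub>R v) - f (p + t *\<^sub>R w) + f p)) \<longlongrightarrow> Aw v) (at (0::real))"
    by simp
  show ?thesis by (rule tendsto_unique[OF trivial_limit_at l1 l3])
qed

lemma lin4:
  fixes T :: "complex \<times> complex \<Rightarrow> complex"
  assumes "linear T"
  shows "T (a, b) = of_real (Re a) * T (1,0) + of_real (Im a) * T (\<i>,0) + of_real (Re b) * T (0,1) + of_real (Im b) * T (0,\<i>)"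
proof -
  have "(a, b) = Re a *\<^sub>R (1,0) + Im a *\<^sub>R (\<i>,0) + Re b *\<^sub>R (0,1) + Im b *\<^sub>R (0,\<i>)"
    by (simp add: complex_eq_iff)
  then have "T (a, b) = T (Re a *\<^sub>R (1,0) + Im a *\<^sub>R (\<i>,0) + Re b *\<^sub>R (0,1) + Im b *\<^sub>R (0,\<i>))" by simp
  also have "\<dots> = Re a *\<^sub>R T (1,0) + Im a *\<^sub>R T (\<i>,0) + Re b *\<^sub>R T (0,1) + Im b *\<^sub>R T (0,\<i>)"
    by (simp only: linear_add[OF assms] linear_scale[OF assms])
  finally show ?thesis by (simp add: scaleR_conv_of_real)
qed

lemma cnj_ReIm: "cnj z = of_real (Re z) - \<i> * of_real (Im z)"
  by (simp add: complex_eq_iff)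

lemma key_alg:
  fixes A13 A23 A33 A34 A14 A24 A44 l3 l4 m :: complex
  shows "((A13 + of_real (Re m) * A33 + of_real (Im m) * A34 + \<i> * (A14 + of_real (Re m) * A34 + of_real (Im m) * A44)) / 2
         + \<i> * ((A23 - of_real (Im m) * A33 + of_real (Re m) * A34 + \<i> * (A24 - of_real (Im m) * A34 + of_real (Re m) * A44)) / 2)) / 2
       - (- cnj ((l3 - \<i> * l4) / 2)) * ((l3 + \<i> * l4) / 2)
       = (((A13 + \<i> * A23) / 2 + cnj l3 * ((l3 + \<i> * l4) / 2) + cnj m * ((A33 + \<i> * A34) / 2))
         + \<i> * ((A14 + \<i> * A24) / 2 + cnj l4 * ((l3 + \<i> * l4) / 2) + cnj m * ((A34 + \<i> * A44) / 2))) / 2"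
  unfolding cnj_ReIm[of m] by (simp add: field_simps)

theorem mainTheorem2:
  fixes U :: "(complex \<times> complex) set"
    and lam :: "complex \<times> complex \<Rightarrow> complex"
    and D :: "complex set"
    and \<phi> :: "complex \<Rightarrow> complex"
  assumes U_open: "open U"
    and lam_smooth: "smooth_on U lam"
    and semihol: "\<forall>p\<in>U. dbar_x lam p + cnj (lam p) * dbar_y lam p = 0"
    and D_open: "open D" and D_conn: "connected D"
    and \<phi>_hol: "\<phi> holomorphic_on D"
    and graph_in_U: "\<forall>x\<in>D. (x, \<phi> x) \<in> U"
    and leaf: "\<forall>x\<in>D. deriv \<phi> x = lam (x, \<phi> x)"
  shows "({x\<in>D. dbar_y lam (x, \<phi> x) = 0} sparse_in D
          \<or> {x\<in>D. dbar_y lam (x, \<phi> x) = 0} = D)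
       \<and> (\<forall>x0. x0 isolated_in {x\<in>D. dbar_y lam (x, \<phi> x) = 0}
              \<longrightarrow> dbar (\<lambda>x. dbar_y lam (x, \<phi> x)) x0 = 0)"
proof -
  define Dl where "Dl q = frechet_derivative lam (at q)" for q
  define L where "L v = (\<lambda>q. Dl q v)" for v
  define L2 where "L2 u v q = frechet_derivative (L v) (at q) u" for u v q
  define e1 :: "complex \<times> complex" where "e1 = (1, 0)"
  define e2 :: "complex \<times> complex" where "e2 = (\<i>, 0)"
  define e3 :: "complex \<times> complex" where "e3 = (0, 1)"
  define e4 :: "complex \<times> complex" where "e4 = (0, \<i>)"
  have sm: "ddir vs lam differentiable (at q)" if "q \<in> U" for vs q
    using lam_smooth that unfolding smooth_on_def by blast
  have ddir1: "ddir [v] lam = L v" for v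
    by (simp add: fun_eq_iff L_def Dl_def)
  have ddir2: "ddir [u, v] lam = L2 u v" for u v
    unfolding L2_def[abs_def] L_def Dl_def[abs_def] by (simp add: fun_eq_iff)
  have lamd: "(lam has_derivative Dl q) (at q)" if "q \<in> U" for q
    using sm[OF that, of "[]"] unfolding Dl_def by (simp add: frechet_derivative_works)
  have Ld: "(L v has_derivative (\<lambda>u. L2 u v q)) (at q)" if "q \<in> U" for v q
    using sm[OF that, of "[v]"] unfolding ddir1 L2_def by (simp add: frechet_derivative_works)
  have L2c: "isCont (L2 u v) q" if "q \<in> U" for u v q
    using sm[OF that, of "[u, v]"] unfolding ddir2 by (simp add: differentiable_imp_continuous_within)
  have sym: "L2 u v q = L2 v u q" if "q \<in> U" for u v q
  proof -
    have Ld': "(L w has_derivative frechet_derivative (L w) (at q)) (at q)" for w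
      using sm[OF that, of "[w]"] unfolding ddir1 by (simp add: frechet_derivative_works)
    have "frechet_derivative (L v) (at q) u = frechet_derivative (L u) (at q) v"
      by (rule schwarz[OF U_open that lamd Ld'[unfolded L_def] Ld'[unfolded L_def], unfolded L_def[symmetric]])
    then show ?thesis by (simp add: L2_def)
  qed
  have lin2: "linear (\<lambda>u. L2 u v q)" if "q \<in> U" for v q
    using Ld[OF that] has_derivative_linear by blast
  have linDl: "linear (Dl q)" if "q \<in> U" for q
    using lamd[OF that] has_derivative_linear by blast
  define b where "b q = (L e3 q + \<i> * L e4 q) / 2" for q
  define S where "S q = (L e1 q + \<i> * L e2 q) / 2 + cnj (lam q) * b q" for q
  define DS where "DS q u = (L2 u e1 q + \<i> * L2 u e2 q) / 2 + cnj (Dl q u) * b q + cnj (lam q) * ((L2 u e3 q + \<i> * L2 u e4 q) / 2)" for q u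
  have S0: "S q = 0" if "q \<in> U" for q
    using semihol that unfolding S_def b_def L_def Dl_def dbar_x_def dbar_y_def e1_def e2_def e3_def e4_def by simp
  have bd: "(b has_derivative (\<lambda>u. (L2 u e3 q + \<i> * L2 u e4 q) / 2)) (at q)" if q: "q \<in> U" for q
    unfolding b_def[abs_def]
    by (rule derivative_eq_intros Ld[OF q] refl | simp)+
  have DS0: "DS q u = 0" if q: "q \<in> U" for q u
  proof -
    have cd: "((\<lambda>q. cnj (lam q)) has_derivative (\<lambda>u. cnj (Dl q u))) (at q)"
      using bounded_linear.has_derivative[OF bounded_linear_cnj lamd[OF q]] .
    have ad: "((\<lambda>q. (L e1 q + \<i> * L e2 q) / 2) has_derivative (\<lambda>u. (L2 u e1 q + \<i> * L2 u e2 q) / 2)) (at q)"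
      by (rule derivative_eq_intros Ld[OF q] refl | simp)+
    have "(S has_derivative DS q) (at q)"
      unfolding S_def[abs_def] DS_def
      by (rule has_derivative_eq_rhs[OF has_derivative_add[OF ad has_derivative_mult[OF cd bd[OF q]]]]) (simp add: fun_eq_iff algebra_simps)
    moreover have "(S has_derivative (\<lambda>u. 0)) (at q)"
      by (rule has_derivative_transform_within_open[OF has_derivative_const U_open q]) (simp add: S0)
    ultimately have "DS q = (\<lambda>u. 0)" by (rule has_derivative_unique)
    then show ?thesis by simp
  qed
  define lamy where "lamy q = (L e3 q - \<i> * L e4 q) / 2" for q
  have lamyd: "(lamy has_derivative (\<lambda>u. (L2 u e3 q - \<i> * L2 u e4 q) / 2)) (at q)" if q: "q \<in> U" for q
    unfolding lamy_def[abs_def]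
    by (rule derivative_eq_intros Ld[OF q] refl | simp)+
  define f where "f x = dbar_y lam (x, \<phi> x)" for x
  have f_eq: "f x = b (x, \<phi> x)" for x
    unfolding f_def b_def dbar_y_def L_def Dl_def e3_def e4_def by simp
  define c where "c x = - cnj (lamy (x, \<phi> x))" for x
  define Df where "Df x v = (L2 (v, deriv \<phi> x * v) e3 (x, \<phi> x) + \<i> * L2 (v, deriv \<phi> x * v) e4 (x, \<phi> x)) / 2" for x v
  define Dc where "Dc x v = - cnj ((L2 (v, deriv \<phi> x * v) e3 (x, \<phi> x) - \<i> * L2 (v, deriv \<phi> x * v) e4 (x, \<phi> x)) / 2)" for x v
  have Phid: "((\<lambda>x. (x, \<phi> x)) has_derivative (\<lambda>v. (v, deriv \<phi> x * v))) (at x)" if x: "x \<in> D" for x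
  proof -
    have "(\<phi> has_field_derivative deriv \<phi> x) (at x)"
      by (rule holomorphic_derivI[OF \<phi>_hol D_open x])
    then show ?thesis
      using has_derivative_Pair[OF has_derivative_ident, of \<phi> "(*) (deriv \<phi> x)" x UNIV]
      by (simp add: has_field_derivative_def)
  qed
  have fd: "(f has_derivative Df x) (at x)" if x: "x \<in> D" for x
  proof -
    have "((\<lambda>x. b (x, \<phi> x)) has_derivative Df x) (at x)"
      using has_derivative_compose[OF Phid[OF x] bd[OF graph_in_U[rule_format, OF x]]]
      by (simp add: Df_def[abs_def] o_def)
    then show ?thesis by (simp add: f_eq[abs_def])
  qed
  have cd: "(c has_derivative Dc x) (at x)" if x: "x \<in> D" for x
  proof -
    have "((\<lambda>x. lamy (x, \<phi> x)) has_derivative (\<lambda>v. (L2 (v, deriv \<phi> x * v) e3 (x, \<phi> x) - \<i> * L2 (v, deriv \<phi> x * v) e4 (x, \<phi> x)) / 2)) (at x)"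
      using has_derivative_compose[OF Phid[OF x] lamyd[OF graph_in_U[rule_format, OF x]]]
      by (simp add: o_def)
    from has_derivative_minus[OF bounded_linear.has_derivative[OF bounded_linear_cnj this]]
    show ?thesis by (simp add: c_def[abs_def] Dc_def[abs_def])
  qed
  have L2exp: "L2 (a, a') k q = of_real (Re a) * L2 e1 k q + of_real (Im a) * L2 e2 k q + of_real (Re a') * L2 e3 k q + of_real (Im a') * L2 e4 k q"
    if q: "q \<in> U" for a a' k q
    using lin4[OF lin2[OF q], of a a'] by (simp add: e1_def e2_def e3_def e4_def)
  have contPhi: "continuous_on D (\<lambda>x. (x, \<phi> x))"
    by (intro continuous_intros holomorphic_on_imp_continuous_on[OF \<phi>_hol])
  have contL2: "continuous_on D (\<lambda>x. L2 u k (x, \<phi> x))" for u k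
  proof (rule continuous_on_compose2[OF _ contPhi])
    show "continuous_on U (L2 u k)" using L2c by (simp add: continuous_at_imp_continuous_on)
  qed (use graph_in_U in auto)
  have contd: "continuous_on D (deriv \<phi>)"
    by (rule holomorphic_on_imp_continuous_on[OF holomorphic_deriv[OF \<phi>_hol D_open]])
  have cD: "continuous_on D (\<lambda>x. Dc x v)" for v
  proof -
    define E where "E k x = of_real (Re v) * L2 e1 k (x, \<phi> x) + of_real (Im v) * L2 e2 k (x, \<phi> x)
       + of_real (Re (deriv \<phi> x * v)) * L2 e3 k (x, \<phi> x) + of_real (Im (deriv \<phi> x * v)) * L2 e4 k (x, \<phi> x)" for k x
    have cr: "continuous_on D (\<lambda>x. complex_of_real (Re (deriv \<phi> x * v)))"
      by (rule continuous_on_of_real continuous_on_Re continuous_on_mult_right contd)+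
    have ci: "continuous_on D (\<lambda>x. complex_of_real (Im (deriv \<phi> x * v)))"
      by (rule continuous_on_of_real continuous_on_Im continuous_on_mult_right contd)+
    have cE: "continuous_on D (E k)" for k
      unfolding E_def
      by (rule continuous_on_add continuous_on_mult cr ci contL2 continuous_on_const)+
    have "continuous_on D (\<lambda>x. - cnj ((E e3 x - \<i> * E e4 x) / 2))"
      by (intro continuous_intros cE) simp
    moreover have "Dc x v = - cnj ((E e3 x - \<i> * E e4 x) / 2)" if "x \<in> D" for x
      unfolding Dc_def E_def using L2exp graph_in_U that by simp
    ultimately show ?thesis by (metis (no_types, lifting) continuous_on_cong)
  qed
  have eq: "(Df x 1 + \<i> * Df x \<i>) / 2 = c x * f x" if x: "x \<in> D" for x
  proof -
    define q where "q = (x, \<phi> x)"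
    have q: "q \<in> U" using graph_in_U x q_def by auto
    define m where "m = deriv \<phi> x"
    have m: "lam q = m" using leaf x unfolding q_def m_def by simp
    have s13: "L2 e3 e1 q = L2 e1 e3 q" and s23: "L2 e3 e2 q = L2 e2 e3 q"
      and s14: "L2 e4 e1 q = L2 e1 e4 q" and s24: "L2 e4 e2 q = L2 e2 e4 q"
      and s34: "L2 e4 e3 q = L2 e3 e4 q"
      using sym[OF q] by auto
    have E1: "Df x 1 = (L2 e1 e3 q + of_real (Re m) * L2 e3 e3 q + of_real (Im m) * L2 e3 e4 q
        + \<i> * (L2 e1 e4 q + of_real (Re m) * L2 e3 e4 q + of_real (Im m) * L2 e4 e4 q)) / 2"
      unfolding Df_def q_def[symmetric] m_def[symmetric] L2exp[OF q] s34 by simp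
    have Ei: "Df x \<i> = (L2 e2 e3 q - of_real (Im m) * L2 e3 e3 q + of_real (Re m) * L2 e3 e4 q
        + \<i> * (L2 e2 e4 q - of_real (Im m) * L2 e3 e4 q + of_real (Re m) * L2 e4 e4 q)) / 2"
      unfolding Df_def q_def[symmetric] m_def[symmetric] L2exp[OF q] s34 by simp
    have D3: "DS q e3 = (L2 e1 e3 q + \<i> * L2 e2 e3 q) / 2 + cnj (L e3 q) * ((L e3 q + \<i> * L e4 q) / 2)
        + cnj m * ((L2 e3 e3 q + \<i> * L2 e3 e4 q) / 2)"
      unfolding DS_def b_def m[symmetric] s13 s23 by (simp add: L_def)
    have D4: "DS q e4 = (L2 e1 e4 q + \<i> * L2 e2 e4 q) / 2 + cnj (L e4 q) * ((L e3 q + \<i> * L e4 q) / 2)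
        + cnj m * ((L2 e3 e4 q + \<i> * L2 e4 e4 q) / 2)"
      unfolding DS_def b_def m[symmetric] s14 s24 s34 by (simp add: L_def)
    have cf: "c x * f x = (- cnj ((L e3 q - \<i> * L e4 q) / 2)) * ((L e3 q + \<i> * L e4 q) / 2)"
      unfolding c_def f_eq lamy_def b_def q_def by simp
    have "(Df x 1 + \<i> * Df x \<i>) / 2 - c x * f x = (DS q e3 + \<i> * DS q e4) / 2"
      unfolding E1 Ei D3 D4 cf by (rule key_alg)
    then show ?thesis using DS0[OF q] by simp
  qed
  have Zeq: "{x\<in>D. dbar_y lam (x, \<phi> x) = 0} = {x\<in>D. f x = 0}" by (simp add: f_def)
  have fdef: "(\<lambda>x. dbar_y lam (x, \<phi> x)) = f" by (simp add: f_def fun_eq_iff)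
  have part1: "{x\<in>D. f x = 0} sparse_in D \<or> {x\<in>D. f x = 0} = D"
    by (rule zeros_dichotomy[OF D_open D_conn fd eq cd cD])
  have part2: "\<forall>x0. x0 isolated_in {x\<in>D. f x = 0} \<longrightarrow> dbar f x0 = 0"
  proof (intro allI impI)
    fix x0 assume "x0 isolated_in {x\<in>D. f x = 0}"
    then have x0: "x0 \<in> D" "f x0 = 0" unfolding isolated_in_def by auto
    have "frechet_derivative f (at x0) = Df x0" using frechet_derivative_at[OF fd[OF x0(1)]] by simp
    then have "dbar f x0 = (Df x0 1 + \<i> * Df x0 \<i>) / 2" unfolding dbar_def by simp
    also have "\<dots> = 0" using eq[OF x0(1)] x0(2) by simp
    finally show "dbar f x0 = 0" .
  qed
  show ?thesis unfolding Zeq fdef using part1 part2 by blast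
qed

end
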